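(* Let $X$ be a separable real Hilbert space, $A$ the generator of a $C_0$-semigroup $(T(t))$ with $\|T(t)\|\le Me^{-\nu t}$ ($M\ge1,\nu>0$), $N_1,\dots,N_n\in\mathcal L(X)$, $\mathcal H$ a separable Hilbert space, $C\in\mathcal L(X,\mathcal H)$, and assume $M^2\Gamma^2(2\nu)^{-1}<1$ with $\Gamma=(\sum_i\|N_iN_i^*\|)^{1/2}$. Let $\varphi_0\in\ker(\mathscr O)$, $T_0>0$, $u\in L^2((0,T_0),\mathbb R^n)$, and let $\varphi\in C([0,T_0],X)$ be the mild solution of the homogeneous system $\varphi'(t)=A\varphi(t)+\sum_{i=1}^nN_i\varphi(t)u_i(t)$, $\varphi(0)=\varphi_0$, i.e. $\varphi(t)=T(t)\varphi_0+\int_0^tT(t-s)\sum_iu_i(s)N_i\varphi(s)ds$. Then $C\varphi(t)=0$ for all $t\in[0,T_0]$.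
   Context: With $\widehat e_i$ the standard basis of $\mathbb R^n$: $O_0(t_1)=CT(t_1)$ and for $k\ge1$, $t\in(0,\infty)^{k+1}$, $O_k(t)y=\sum_{n_1,\dots,n_k}CT(t_1)N_{n_1}T(t_2)\cdots N_{n_k}T(t_{k+1})y\otimes(\widehat e_{n_1}\otimes\dots\otimes\widehat e_{n_k})$. The observability gramian $\mathscr O\in\mathcal L(X)$ is given by $\langle x,\mathscr Oy\rangle=\sum_{k\ge0}\int_{(0,\infty)^{k+1}}\langle O_k(s)x,O_k(s)y\rangle ds$. *)

theory Defs
  imports "HOL-Analysis.Analysis"
begin

definition C0_semigroup :: "(real \<Rightarrow> 'x::real_normed_vector \<Rightarrow> 'x) \<Rightarrow> bool" where
  "C0_semigroup T \<longleftrightarrow>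
     (\<forall>t\<ge>0. bounded_linear (T t)) \<and>
     T 0 = id \<and>
     (\<forall>s\<ge>0. \<forall>t\<ge>0. T (s + t) = T s \<circ> T t) \<and>
     (\<forall>x. ((\<lambda>t. T t x) \<longlongrightarrow> x) (at_right 0))"

text \<open>The operator  T(s_0) N_{m 1} T(s_1) ... N_{m k} T(s_k)
  (times s_0..s_k play the role of t_1..t_{k+1}; indices m 1..m k those of n_1..n_k).\<close>
fun opchain :: "(real \<Rightarrow> 'x \<Rightarrow> 'x) \<Rightarrow> (nat \<Rightarrow> 'x \<Rightarrow> 'x) \<Rightarrow> (nat \<Rightarrow> real) \<Rightarrow> (nat \<Rightarrow> nat) \<Rightarrow> nat \<Rightarrow> 'x \<Rightarrow> 'x" where
  "opchain T N s m 0 = T (s 0)"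
| "opchain T N s m (Suc k) = opchain T N s m k \<circ> N (m (Suc k)) \<circ> T (s (Suc k))"

text \<open>\<langle>O_k(s)x, O_k(s)y\<rangle> in H \<otimes> (R^n)^{\<otimes>k}: the basis tensors are orthonormal,
  so this is the sum over all multi-indices of the inner products in H.
  The inputs N are indexed by 0..n-1.\<close>
definition Ok_inner :: "('x \<Rightarrow> 'h::real_inner) \<Rightarrow> (real \<Rightarrow> 'x \<Rightarrow> 'x) \<Rightarrow> (nat \<Rightarrow> 'x \<Rightarrow> 'x) \<Rightarrow> nat
     \<Rightarrow> nat \<Rightarrow> (nat \<Rightarrow> real) \<Rightarrow> 'x \<Rightarrow> 'x \<Rightarrow> real" where
  "Ok_inner C T N n k s x y =
     (\<Sum>m\<in>PiE {1..k} (\<lambda>_. {..<n}). inner (C (opchain T N s m k x)) (C (opchain T N s m k y)))"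

definition obs_gram :: "('x \<Rightarrow> 'h::real_inner) \<Rightarrow> (real \<Rightarrow> 'x \<Rightarrow> 'x) \<Rightarrow> (nat \<Rightarrow> 'x \<Rightarrow> 'x) \<Rightarrow> nat
     \<Rightarrow> 'x \<Rightarrow> 'x \<Rightarrow> real" where
  "obs_gram C T N n x y =
     (\<Sum>k. \<integral>s. Ok_inner C T N n k s x y
              \<partial>(\<Pi>\<^sub>M j\<in>{..k}. restrict_space lborel {0<..}))"

text \<open>Kernel of the gramian: \<O> y = 0 iff \<langle>x, \<O> y\<rangle> = 0 for all x.\<close>
definition obs_kernel :: "('x \<Rightarrow> 'h::real_inner) \<Rightarrow> (real \<Rightarrow> 'x \<Rightarrow> 'x) \<Rightarrow> (nat \<Rightarrow> 'x \<Rightarrow> 'x) \<Rightarrow> nat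
     \<Rightarrow> 'x set" where
  "obs_kernel C T N n = {y. \<forall>x. obs_gram C T N n x y = 0}"

end

theory Submission
  imports Defs "HOL-Probability.Sinc_Integral"
begin

locale sgp =
  fixes T :: "real \<Rightarrow> 'x::{real_inner,polish_space} \<Rightarrow> 'x" and M \<nu> :: real
  assumes sg: "C0_semigroup T" and bnd: "\<forall>t\<ge>0. onorm (T t) \<le> M * exp (- \<nu> * t)"
    and M1: "M \<ge> 1" and nu: "\<nu> > 0"
begin

lemma bl: "t \<ge> 0 \<Longrightarrow> bounded_linear (T t)"
  using sg by (simp add: C0_semigroup_def)

lemma T0[simp]: "T 0 x = x"
  using sg by (simp add: C0_semigroup_def)

lemma Tadd: "s \<ge> 0 \<Longrightarrow> t \<ge> 0 \<Longrightarrow> T (s + t) x = T s (T t x)"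
  using sg by (simp add: C0_semigroup_def)

lemma rc: "((\<lambda>h. T h x) \<longlongrightarrow> x) (at_right 0)"
  using sg by (simp add: C0_semigroup_def)

lemma normT: "t \<ge> 0 \<Longrightarrow> norm (T t x) \<le> M * exp (- \<nu> * t) * norm x"
proof -
  assume t: "t \<ge> 0"
  have "norm (T t x) \<le> onorm (T t) * norm x" using bl[OF t] by (rule onorm)
  also have "\<dots> \<le> M * exp (- \<nu> * t) * norm x"
    using bnd t by (intro mult_right_mono) auto
  finally show ?thesis .
qed

lemma normT1: "t \<ge> 0 \<Longrightarrow> norm (T t x) \<le> M * norm x"
proof -
  assume t: "t \<ge> 0"
  have "exp (- \<nu> * t) \<le> 1" using nu t by simp
  hence "M * exp (- \<nu> * t) * norm x \<le> M * norm x" using M1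
    by (intro mult_right_mono) (auto simp: mult_le_cancel_left1)
  thus ?thesis using normT[OF t, of x] by linarith
qed

lemma T_diff_bound:
  assumes a: "a \<ge> 0" and b: "b \<ge> 0"
  shows "norm (T a x - T b x) \<le> M * norm (T \<bar>a - b\<bar> x - x)"
proof (cases "a \<ge> b")
  case True
  have "T a x = T b (T (a - b) x)" using Tadd[of b "a - b" x] True b by simp
  hence "T a x - T b x = T b (T (a - b) x - x)"
    using bl[OF b] by (simp add: linear_diff bounded_linear.linear)
  thus ?thesis using normT1[OF b, of "T (a - b) x - x"] True by simp
next
  case False
  have "T b x = T a (T (b - a) x)" using Tadd[of a "b - a" x] False a by simp
  hence "T a x - T b x = - T a (T (b - a) x - x)"
    using bl[OF a] by (simp add: linear_diff bounded_linear.linear)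
  thus ?thesis using normT1[OF a, of "T (b - a) x - x"] False by simp
qed

lemma g_lim:
  assumes "hp \<longlonglongrightarrow> 0" "\<And>p. hp p \<ge> 0"
  shows "(\<lambda>p. norm (T (hp p) x - x)) \<longlonglongrightarrow> 0"
proof (rule LIMSEQ_I)
  fix r :: real assume r: "r > 0"
  have "eventually (\<lambda>h. dist (T h x) x < r) (at_right 0)"
    using rc r tendstoD by blast
  then obtain b where b: "b > 0" "\<And>h. h > 0 \<Longrightarrow> h < b \<Longrightarrow> dist (T h x) x < r"
    by (auto simp: eventually_at_right_field)
  obtain no where no: "\<And>p. p \<ge> no \<Longrightarrow> norm (hp p - 0) < b"
    using LIMSEQ_D[OF assms(1) b(1)] by blast
  show "\<exists>no. \<forall>n\<ge>no. norm (norm (T (hp n) x - x) - 0) < r"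
  proof (intro exI allI impI)
    fix p assume "p \<ge> no"
    hence hb: "hp p < b" using no[of p] assms(2)[of p] by simp
    show "norm (norm (T (hp p) x - x) - 0) < r"
    proof (cases "hp p = 0")
      case True thus ?thesis using r by simp
    next
      case False
      hence "hp p > 0" using assms(2)[of p] by simp
      thus ?thesis using b(2)[OF _ hb] by (simp add: dist_norm)
    qed
  qed
qed

lemma Tcont_seq:
  assumes t: "t \<ge> 0" and tp: "\<And>p. tp p \<ge> 0" "tp \<longlonglongrightarrow> t" and xp: "xp \<longlonglongrightarrow> x"
  shows "(\<lambda>p. T (tp p) (xp p)) \<longlonglongrightarrow> T t x"
proof -
  have h: "(\<lambda>p. \<bar>tp p - t\<bar>) \<longlonglongrightarrow> 0"
    using tp(2) by (metis LIM_zero tendsto_rabs_zero)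
  have l1: "(\<lambda>p. norm (T \<bar>tp p - t\<bar> x - x)) \<longlonglongrightarrow> 0"
    by (rule g_lim[OF h]) simp
  have l2: "(\<lambda>p. norm (xp p - x)) \<longlonglongrightarrow> 0"
    using xp by (metis LIM_zero tendsto_norm_zero)
  have l3: "(\<lambda>p. M * norm (xp p - x) + M * norm (T \<bar>tp p - t\<bar> x - x)) \<longlonglongrightarrow> 0"
    using tendsto_add[OF tendsto_mult_right_zero[OF l2] tendsto_mult_right_zero[OF l1]] by simp
  have "norm (T (tp p) (xp p) - T t x) \<le> M * norm (xp p - x) + M * norm (T \<bar>tp p - t\<bar> x - x)" for p
  proof -
    have "T (tp p) (xp p) - T t x = T (tp p) (xp p - x) + (T (tp p) x - T t x)"
      using bl[OF tp(1)[of p]] by (simp add: linear_diff bounded_linear.linear)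
    hence "norm (T (tp p) (xp p) - T t x) \<le> norm (T (tp p) (xp p - x)) + norm (T (tp p) x - T t x)"
      by (metis norm_triangle_ineq)
    also have "\<dots> \<le> M * norm (xp p - x) + M * norm (T \<bar>tp p - t\<bar> x - x)"
      using normT1[OF tp(1)[of p]] T_diff_bound[OF tp(1)[of p] t] by (intro add_mono) auto
    finally show ?thesis .
  qed
  hence "(\<lambda>p. T (tp p) (xp p) - T t x) \<longlonglongrightarrow> 0"
    by (intro Lim_null_comparison[OF _ l3]) auto
  thus ?thesis by (rule LIM_zero_cancel)
qed

end


lemma opchain_cong:
  "(\<And>j. j \<le> k \<Longrightarrow> s j = s' j) \<Longrightarrow> (\<And>j. j \<in> {1..k} \<Longrightarrow> m j = m' j) \<Longrightarrow>
   opchain T N s m k = opchain T N s' m' k"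
proof (induction k)
  case 0 thus ?case by simp
next
  case (Suc k)
  have "opchain T N s m k = opchain T N s' m' k"
    using Suc.prems by (intro Suc.IH) auto
  moreover have "m (Suc k) = m' (Suc k)" "s (Suc k) = s' (Suc k)" using Suc.prems by auto
  ultimately show ?case by simp
qed

locale sgpN = sgp T M \<nu> for T :: "real \<Rightarrow> 'x::{real_inner,polish_space} \<Rightarrow> 'x" and M \<nu> +
  fixes N :: "nat \<Rightarrow> 'x \<Rightarrow> 'x" and n :: nat
  assumes Nbl: "\<forall>i<n. bounded_linear (N i)"
begin

definition valid :: "(nat \<Rightarrow> nat) \<Rightarrow> nat \<Rightarrow> bool" where
  "valid m k \<longleftrightarrow> (\<forall>j\<in>{1..k}. m j < n)"

lemma valid_Suc: "valid m (Suc k) \<Longrightarrow> valid m k \<and> m (Suc k) < n"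
  by (auto simp: valid_def)

lemma opchain_bl:
  "valid m k \<Longrightarrow> (\<And>j. j \<le> k \<Longrightarrow> s j \<ge> 0) \<Longrightarrow> bounded_linear (opchain T N s m k)"
proof (induction k)
  case 0 thus ?case using bl by simp
next
  case (Suc k)
  have 1: "bounded_linear (opchain T N s m k)" using Suc valid_Suc by auto
  have 2: "bounded_linear (N (m (Suc k)))" using Suc.prems valid_Suc Nbl by auto
  have 3: "bounded_linear (T (s (Suc k)))" using Suc.prems bl by auto
  show ?case using bounded_linear_compose[OF bounded_linear_compose[OF 1 2] 3] by (simp add: o_def)
qed

lemma opchain_shift:
  assumes "s k \<ge> 0" "a \<ge> 0"
  shows "opchain T N s m k (T a y) = opchain T N (s(k := s k + a)) m k y"
proof (cases k)
  case 0 thus ?thesis using assms Tadd by simp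
next
  case (Suc k')
  have "opchain T N (s(k := s k + a)) m k' = opchain T N s m k'"
    by (rule opchain_cong) (auto simp: Suc)
  thus ?thesis using assms Tadd Suc by simp
qed

lemma opchain_ext:
  assumes "s k \<ge> 0" "a \<ge> 0"
  shows "opchain T N s m k (T a (N i y)) =
         opchain T N (s(k := s k + a, Suc k := 0)) (m(Suc k := i)) (Suc k) y"
proof -
  have "opchain T N (s(k := s k + a, Suc k := 0)) (m(Suc k := i)) k = opchain T N (s(k := s k + a)) m k"
    by (rule opchain_cong) auto
  thus ?thesis using opchain_shift[of s k a] assms by simp
qed

lemma opchain_norm:
  assumes "valid m k" "\<And>j. j \<le> k \<Longrightarrow> s j \<ge> 0"
    and b: "\<And>i x. i < n \<Longrightarrow> norm (N i x) \<le> b i * norm x" "\<And>i. i < n \<Longrightarrow> b i \<ge> 0"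
  shows "norm (opchain T N s m k y) \<le>
    (\<Prod>j\<le>k. M * exp (- \<nu> * s j)) * (\<Prod>j\<in>{1..k}. b (m j)) * norm y"
  using assms(1,2)
proof (induction k arbitrary: y)
  case 0 thus ?case using normT by simp
next
  case (Suc k)
  have v: "valid m k" "m (Suc k) < n" using valid_Suc[OF Suc.prems(1)] by auto
  have s: "s (Suc k) \<ge> 0" using Suc.prems by auto
  let ?z = "N (m (Suc k)) (T (s (Suc k)) y)"
  have "norm (opchain T N s m (Suc k) y) = norm (opchain T N s m k ?z)" by simp
  also have "\<dots> \<le> (\<Prod>j\<le>k. M * exp (- \<nu> * s j)) * (\<Prod>j\<in>{1..k}. b (m j)) * norm ?z"
    using Suc.IH v Suc.prems by auto
  also have "norm ?z \<le> b (m (Suc k)) * (M * exp (- \<nu> * s (Suc k)) * norm y)"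
    using b(1)[OF v(2)] normT[OF s] b(2)[OF v(2)] by (meson mult_left_mono order_trans)
  hence "(\<Prod>j\<le>k. M * exp (- \<nu> * s j)) * (\<Prod>j\<in>{1..k}. b (m j)) * norm ?z \<le>
     (\<Prod>j\<le>k. M * exp (- \<nu> * s j)) * (\<Prod>j\<in>{1..k}. b (m j)) * (b (m (Suc k)) * (M * exp (- \<nu> * s (Suc k)) * norm y))"
  proof (rule mult_left_mono)
    show "0 \<le> (\<Prod>j\<le>k. M * exp (- \<nu> * s j)) * (\<Prod>j\<in>{1..k}. b (m j))"
      using M1 b(2) v(1) unfolding valid_def by (intro mult_nonneg_nonneg prod_nonneg ballI) (auto intro: order_trans[OF zero_le_one])
  qed
  also have "\<dots> = (\<Prod>j\<le>Suc k. M * exp (- \<nu> * s j)) * (\<Prod>j\<in>{1..Suc k}. b (m j)) * norm y"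
    by (simp only: prod.atMost_Suc prod.nat_ivl_Suc' mult_ac)
  finally show ?case .
qed

lemma opchain_cont:
  assumes "valid m k" "\<And>j. j \<le> k \<Longrightarrow> s j \<ge> 0" "\<And>j p. j \<le> k \<Longrightarrow> sp p j \<ge> 0"
    "\<And>j. j \<le> k \<Longrightarrow> (\<lambda>p. sp p j) \<longlonglongrightarrow> s j"
  shows "yp \<longlonglongrightarrow> y \<Longrightarrow> (\<lambda>p. opchain T N (sp p) m k (yp p)) \<longlonglongrightarrow> opchain T N s m k y"
  using assms
proof (induction k arbitrary: yp y)
  case 0 thus ?case by (simp add: Tcont_seq)
next
  case (Suc k)
  have v: "valid m k" "m (Suc k) < n" using valid_Suc[OF Suc.prems(2)] by auto
  have "(\<lambda>p. T (sp p (Suc k)) (yp p)) \<longlonglongrightarrow> T (s (Suc k)) y"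
    using Suc.prems by (intro Tcont_seq) auto
  hence "(\<lambda>p. N (m (Suc k)) (T (sp p (Suc k)) (yp p))) \<longlonglongrightarrow> N (m (Suc k)) (T (s (Suc k)) y)"
    using Nbl v(2) bounded_linear.tendsto by blast
  hence "(\<lambda>p. opchain T N (sp p) m k (N (m (Suc k)) (T (sp p (Suc k)) (yp p)))) \<longlonglongrightarrow>
     opchain T N s m k (N (m (Suc k)) (T (s (Suc k)) y))"
    using Suc.prems v by (intro Suc.IH) auto
  thus ?case by simp
qed

end


context sgpN
begin

abbreviation R :: "real measure" where "R \<equiv> restrict_space lborel {0<..}"

lemma comp_meas: "j \<in> I \<Longrightarrow> (\<lambda>s. s j) \<in> borel_measurable (Pi\<^sub>M I (\<lambda>_. R))"
proof -
  assume j: "j \<in> I"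
  have id: "(\<lambda>x::real. x) \<in> borel_measurable R"
    by (intro measurable_restrict_space1) simp
  show ?thesis using measurable_compose[OF measurable_component_singleton[OF j] id] by simp
qed

lemma space_PM: "s \<in> space (Pi\<^sub>M I (\<lambda>_. R)) \<Longrightarrow> j \<in> I \<Longrightarrow> s j > 0"
  by (auto simp: space_PiM space_restrict_space PiE_def Pi_def)

definition Phi :: "real \<times> 'x \<Rightarrow> 'x" where "Phi p = T (max 0 (fst p)) (snd p)"

lemma Phi_cont: "continuous_on UNIV Phi"
proof (rule continuous_on_sequentiallyI)
  fix u :: "nat \<Rightarrow> real \<times> 'x" and a assume "u \<longlonglongrightarrow> a"
  hence "(\<lambda>p. max 0 (fst (u p))) \<longlonglongrightarrow> max 0 (fst a)" "(\<lambda>p. snd (u p)) \<longlonglongrightarrow> snd a"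
    by (auto intro!: tendsto_intros)
  thus "(\<lambda>p. Phi (u p)) \<longlonglongrightarrow> Phi a" unfolding Phi_def
    by (intro Tcont_seq) auto
qed

lemma Phi_meas: "Phi \<in> borel_measurable (borel \<Otimes>\<^sub>M borel)"
  unfolding borel_prod using Phi_cont by (rule borel_measurable_continuous_onI)

lemma T_meas:
  assumes "j \<in> I" "v \<in> borel_measurable (Pi\<^sub>M I (\<lambda>_. R))"
  shows "(\<lambda>s. T (s j) (v s)) \<in> borel_measurable (Pi\<^sub>M I (\<lambda>_. R))"
proof -
  have "(\<lambda>s. Phi (s j, v s)) \<in> borel_measurable (Pi\<^sub>M I (\<lambda>_. R))"
    using measurable_compose[OF measurable_Pair[OF comp_meas[OF assms(1)] assms(2)] Phi_meas] .
  moreover have "\<And>s. s \<in> space (Pi\<^sub>M I (\<lambda>_. R)) \<Longrightarrow> Phi (s j, v s) = T (s j) (v s)"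
    using space_PM[OF _ assms(1)] unfolding Phi_def by (simp add: less_imp_le)
  ultimately show ?thesis using measurable_cong[of _ "\<lambda>s. Phi (s j, v s)" "\<lambda>s. T (s j) (v s)"] by blast
qed

lemma bl_meas: "bounded_linear f \<Longrightarrow> f \<in> borel_measurable borel"
  by (intro borel_measurable_continuous_onI linear_continuous_on)

lemma opchain_meas:
  "valid m k \<Longrightarrow> k \<le> K \<Longrightarrow> v \<in> borel_measurable (Pi\<^sub>M {..K} (\<lambda>_. R)) \<Longrightarrow>
   (\<lambda>s. opchain T N s m k (v s)) \<in> borel_measurable (Pi\<^sub>M {..K} (\<lambda>_. R))"
proof (induction k arbitrary: v)
  case 0 thus ?case using T_meas[of 0 "{..K}" v] by simp
next
  case (Suc k)
  have v: "valid m k" "m (Suc k) < n" using valid_Suc[OF Suc.prems(1)] by auto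
  have "(\<lambda>s. T (s (Suc k)) (v s)) \<in> borel_measurable (Pi\<^sub>M {..K} (\<lambda>_. R))"
    using Suc.prems by (intro T_meas) auto
  hence "(\<lambda>s. N (m (Suc k)) (T (s (Suc k)) (v s))) \<in> borel_measurable (Pi\<^sub>M {..K} (\<lambda>_. R))"
    using bl_meas Nbl v(2) measurable_compose by blast
  hence "(\<lambda>s. opchain T N s m k (N (m (Suc k)) (T (s (Suc k)) (v s)))) \<in> borel_measurable (Pi\<^sub>M {..K} (\<lambda>_. R))"
    using Suc v by (intro Suc.IH) auto
  thus ?case by simp
qed

end


abbreviation RR :: "real measure" where "RR \<equiv> restrict_space lborel {0<..}"

lemma sfR: "sigma_finite_measure RR"
  by (rule sigma_finite_measure_restrict_space[OF sigma_finite_lborel]) simp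

lemma psf: "product_sigma_finite (\<lambda>_::nat. RR)"
  unfolding product_sigma_finite_def using sfR by simp

lemma exp_R_int: "u > 0 \<Longrightarrow> integrable RR (\<lambda>x. c * exp (-(x * u)))"
proof -
  assume u: "u > 0"
  have "set_integrable lborel {0<..} (\<lambda>x. exp (-(x * u)))" by (rule integrable_I0i_exp_mscale[OF u])
  hence "integrable RR (\<lambda>x. exp (-(x * u)))"
    by (subst integrable_restrict_space) (auto simp: set_integrable_def)
  thus ?thesis by (rule integrable_mult_right)
qed

lemma exp_R_integral: "u > 0 \<Longrightarrow> integral\<^sup>L RR (\<lambda>x. c * exp (-(x * u))) = c / u"
proof -
  assume u: "u > 0"
  have "integral\<^sup>L RR (\<lambda>x. exp (-(x * u))) = (LINT x:{0<..}|lborel. exp (-(x * u)))"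
    by (subst integral_restrict_space) (auto simp: set_lebesgue_integral_def)
  also have "\<dots> = 1 / u" using LBINT_I0i_exp_mscale[OF u] by (simp add: interval_lebesgue_integral_0_infty)
  finally show ?thesis by simp
qed

lemma prod_int:
  fixes I :: "nat set"
  assumes "finite I" "u > 0"
  shows "integrable (Pi\<^sub>M I (\<lambda>_. RR)) (\<lambda>s. \<Prod>j\<in>I. c * exp (-(s j * u)))"
    "integral\<^sup>L (Pi\<^sub>M I (\<lambda>_. RR)) (\<lambda>s. \<Prod>j\<in>I. c * exp (-(s j * u))) = (c / u) ^ card I"
proof -
  interpret product_sigma_finite "\<lambda>_::nat. RR" by (rule psf)
  show "integrable (Pi\<^sub>M I (\<lambda>_. RR)) (\<lambda>s. \<Prod>j\<in>I. c * exp (-(s j * u)))"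
    using product_integrable_prod[OF assms(1), of "\<lambda>_ x. c * exp (-(x * u))"] exp_R_int[OF assms(2)] by simp
  show "integral\<^sup>L (Pi\<^sub>M I (\<lambda>_. RR)) (\<lambda>s. \<Prod>j\<in>I. c * exp (-(s j * u))) = (c / u) ^ card I"
    using product_integral_prod[OF assms(1), of "\<lambda>_ x. c * exp (-(x * u))"] exp_R_int[OF assms(2)]
      exp_R_integral[OF assms(2)] by simp
qed



lemma par_law: "norm (a - b)^2 + norm (a + b)^2 = 2 * norm a^2 + 2 * norm (b::'a::real_inner)^2"
  by (simp add: power2_norm_eq_inner inner_add_left inner_add_right inner_diff_left inner_diff_right inner_commute)

lemma proj_exists:
  fixes K :: "'a::{real_inner,complete_space} set"
  assumes sK: "subspace K" and cK: "closed K"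
  shows "\<exists>p\<in>K. \<forall>k\<in>K. inner (x - p) k = 0"
proof -
  define S where "S = (\<lambda>k. norm (x - k)^2) ` K"
  define d where "d = Inf S"
  have Sne: "S \<noteq> {}" using subspace_0[OF sK] by (auto simp: S_def)
  have Sbdd: "bdd_below S" unfolding S_def by (rule bdd_belowI[of _ 0]) auto
  have dle: "d \<le> norm (x - k)^2" if "k \<in> K" for k
    unfolding d_def by (rule cInf_lower) (use that Sbdd S_def in auto)
  have "\<exists>k\<in>K. norm (x - k)^2 < d + inverse (real (Suc p))" for p
  proof -
    have "Inf S < d + inverse (real (Suc p))" unfolding d_def by simp
    thus ?thesis using cInf_less_iff[OF Sne Sbdd] by (auto simp: S_def)
  qed
  then obtain kp where kp: "\<And>p. kp p \<in> K" "\<And>p. norm (x - kp p)^2 < d + inverse (real (Suc p))"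
    by metis
  have bound: "norm (kp m - kp q)^2 \<le> 2 * inverse (real (Suc m)) + 2 * inverse (real (Suc q))" for m q
  proof -
    define mid where "mid = (1/2) *\<^sub>R (kp m + kp q)"
    have "mid \<in> K" unfolding mid_def using kp(1) sK by (simp add: subspace_add subspace_scale)
    hence "d \<le> norm (x - mid)^2" by (rule dle)
    have e: "(x - kp m) + (x - kp q) = 2 *\<^sub>R (x - mid)" unfolding mid_def by (simp add: algebra_simps scaleR_2)
    have "norm ((x - kp m) + (x - kp q))^2 = 4 * norm (x - mid)^2"
      unfolding e by (simp add: power_mult_distrib)
    moreover have "(x - kp m) - (x - kp q) = kp q - kp m" by simp
    ultimately have "norm (kp q - kp m)^2 + 4 * norm (x - mid)^2 = 2 * norm (x - kp m)^2 + 2 * norm (x - kp q)^2"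
      using par_law[of "x - kp m" "x - kp q"] by simp
    thus ?thesis using kp(2)[of m] kp(2)[of q] \<open>d \<le> norm (x - mid)^2\<close> by (simp add: norm_minus_commute)
  qed
  have "Cauchy kp"
  proof (rule CauchyI)
    fix e :: real assume e: "e > 0"
    obtain P where P: "inverse (real (Suc P)) < e^2 / 4" using reals_Archimedean[of "e^2/4"] e by auto
    show "\<exists>P. \<forall>m\<ge>P. \<forall>q\<ge>P. norm (kp m - kp q) < e"
    proof (intro exI allI impI)
      fix m q assume mq: "m \<ge> P" "q \<ge> P"
      have "inverse (real (Suc m)) \<le> inverse (real (Suc P))" "inverse (real (Suc q)) \<le> inverse (real (Suc P))"
        using mq by (auto simp: field_simps)
      hence "norm (kp m - kp q)^2 < e^2" using bound[of m q] P by linarith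
      thus "norm (kp m - kp q) < e" using e by (simp add: power_less_imp_less_base)
    qed
  qed
  then obtain p where p: "kp \<longlonglongrightarrow> p" using convergent_eq_Cauchy by blast
  have pK: "p \<in> K" using closed_sequentially[OF cK kp(1) p] .
  have lim1: "(\<lambda>q. norm (x - kp q)^2) \<longlonglongrightarrow> norm (x - p)^2"
    using p by (intro tendsto_intros)
  have lim2: "(\<lambda>q. d + inverse (real (Suc q))) \<longlonglongrightarrow> d"
    using LIMSEQ_inverse_real_of_nat tendsto_add[of "\<lambda>_. d" d sequentially] by fastforce
  have dp: "norm (x - p)^2 \<le> d"
    using lim1 lim2 kp(2) by (intro LIMSEQ_le) (auto intro: less_imp_le)
  show ?thesis
  proof (intro bexI[OF _ pK] ballI)
    fix k assume k: "k \<in> K"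
    define w where "w = x - p"
    define c where "c = inner w k"
    define t where "t = c / (norm k ^2 + 1)"
    have "p + t *\<^sub>R k \<in> K" using pK k sK by (simp add: subspace_add subspace_scale)
    hence "d \<le> norm (w - t *\<^sub>R k)^2" using dle[of "p + t *\<^sub>R k"] by (simp add: w_def algebra_simps)
    also have "norm (w - t *\<^sub>R k)^2 = norm w^2 - 2 * t * c + t^2 * norm k^2"
    proof -
      have "inner (w - t *\<^sub>R k) (w - t *\<^sub>R k) = inner w w - 2 * t * c + t^2 * inner k k"
        by (simp add: inner_diff_left inner_diff_right c_def inner_commute power2_eq_square algebra_simps)
      thus ?thesis by (simp add: power2_norm_eq_inner)
    qed
    finally have "2 * t * c \<le> t^2 * norm k^2" using dp by (simp add: w_def)
    hence i1: "2 * t * c * (norm k^2 + 1)^2 \<le> t^2 * norm k^2 * (norm k^2 + 1)^2"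
      by (intro mult_right_mono) auto
    have D: "norm k^2 + 1 > 0" by (simp add: add_nonneg_pos)
    have tD: "t * (norm k^2 + 1) = c" using D unfolding t_def by simp
    have e1: "2 * t * c * (norm k^2 + 1)^2 = 2 * c^2 * (norm k^2 + 1)"
    proof -
      have "2 * t * c * (norm k^2 + 1)^2 = 2 * c * (t * (norm k^2 + 1)) * (norm k^2 + 1)"
        by (simp add: power2_eq_square mult_ac)
      also have "\<dots> = 2 * c * c * (norm k^2 + 1)" by (simp only: tD)
      finally show ?thesis by (simp add: power2_eq_square)
    qed
    have e2: "t^2 * norm k^2 * (norm k^2 + 1)^2 = c^2 * norm k^2"
    proof -
      have "t^2 * norm k^2 * (norm k^2 + 1)^2 = (t * (norm k^2 + 1))^2 * norm k^2"
        by (simp add: power_mult_distrib mult_ac)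
      thus ?thesis by (simp add: tD)
    qed
    have e3: "c^2 * (norm k^2 + 2) = 2 * c^2 * (norm k^2 + 1) - c^2 * norm k^2" by (simp add: algebra_simps)
    have "c^2 * (norm k^2 + 2) \<le> 0" using i1 e1 e2 e3 by linarith
    moreover have "norm k^2 + 2 > 0" by (simp add: add_nonneg_pos)
    ultimately have "c^2 \<le> 0" by (simp add: mult_le_0_iff)
    thus "inner (x - p) k = 0" by (simp add: c_def w_def)
  qed
qed

lemma riesz:
  fixes f :: "'a::{real_inner,complete_space} \<Rightarrow> real"
  assumes f: "bounded_linear f"
  shows "\<exists>z. \<forall>x. f x = inner x z"
proof (cases "\<forall>x. f x = 0")
  case True thus ?thesis by (intro exI[of _ 0]) simp
next
  case False
  then obtain x0 where x0: "f x0 \<noteq> 0" by blast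
  interpret f: bounded_linear f by fact
  define K where "K = {x. f x = 0}"
  have sK: "subspace K" unfolding K_def subspace_def by (simp add: f.add f.scale)
  have cK: "closed K" unfolding K_def by (intro closed_Collect_eq f.continuous_on continuous_on_const continuous_on_id)
  obtain p where p: "p \<in> K" "\<And>k. k \<in> K \<Longrightarrow> inner (x0 - p) k = 0" using proj_exists[OF sK cK] by blast
  define w where "w = x0 - p"
  have fw: "f w \<noteq> 0" using p(1) x0 by (simp add: w_def f.diff K_def)
  have w0: "w \<noteq> 0" using fw by auto
  show ?thesis
  proof (intro exI[of _ "(f w / norm w^2) *\<^sub>R w"] allI)
    fix x
    have "x - (f x / f w) *\<^sub>R w \<in> K" using fw by (simp add: K_def f.diff f.scale)
    hence "inner w (x - (f x / f w) *\<^sub>R w) = 0" using p(2) by (simp add: w_def)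
    hence "inner x w = (f x / f w) * norm w^2"
      by (simp add: inner_diff_right inner_commute power2_norm_eq_inner)
    thus "f x = inner x ((f w / norm w^2) *\<^sub>R w)" using fw w0 by (simp add: field_simps)
  qed
qed

lemma adjoint_prop:
  fixes N :: "'a::{real_inner,complete_space} \<Rightarrow> 'a"
  assumes N: "bounded_linear N"
  shows "\<forall>x y. inner (N x) y = inner x (adjoint N y)"
proof -
  have "\<forall>y. \<exists>z. \<forall>x. inner (N x) y = inner x z"
  proof
    fix y
    have "bounded_linear (\<lambda>x. inner (N x) y)"
      using bounded_linear_compose[OF bounded_linear_inner_left N] .
    thus "\<exists>z. \<forall>x. inner (N x) y = inner x z" by (rule riesz)
  qed
  then obtain g where "\<forall>y x. inner (N x) y = inner x (g y)" by metis
  hence "\<exists>f'. \<forall>x y. inner (N x) y = inner x (f' y)" by blast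
  thus ?thesis unfolding adjoint_def by (rule someI_ex)
qed

lemma adjoint_bound:
  fixes N :: "'a::{real_inner,complete_space} \<Rightarrow> 'a"
  assumes N: "bounded_linear N"
  shows "norm (N x) \<le> sqrt (onorm (N \<circ> adjoint N)) * norm x" "onorm (N \<circ> adjoint N) \<ge> 0"
proof -
  define A where "A = adjoint N"
  have ad: "\<And>x y. inner (N x) y = inner x (A y)" using adjoint_prop[OF N] by (simp add: A_def)
  have eq: "a = b" if "\<And>x. inner x a = inner x b" for a b :: 'a
  proof -
    have "inner (a - b) (a - b) = 0" using that[of "a - b"] by (simp add: inner_diff_right)
    thus ?thesis by simp
  qed
  interpret N: bounded_linear N by fact
  have lin: "linear A"
  proof
    show "A (y1 + y2) = A y1 + A y2" for y1 y2
      by (rule eq) (simp add: inner_add_right ad[symmetric])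
    show "A (r *\<^sub>R y) = r *\<^sub>R A y" for r y
      by (rule eq) (simp add: ad[symmetric])
  qed
  have "norm (A y) \<le> onorm N * norm y" for y
  proof -
    have "norm (A y)^2 = inner (N (A y)) y" by (simp add: ad power2_norm_eq_inner)
    also have "\<dots> \<le> norm (N (A y)) * norm y" by (rule norm_cauchy_schwarz)
    also have "\<dots> \<le> onorm N * norm (A y) * norm y"
      by (intro mult_right_mono onorm[OF N]) simp
    finally have "norm (A y) * norm (A y) \<le> (onorm N * norm y) * norm (A y)"
      by (simp add: power2_eq_square mult_ac)
    thus ?thesis by (cases "norm (A y) = 0") (auto simp: mult_le_cancel_right intro: mult_nonneg_nonneg onorm_pos_le[OF N])
  qed
  hence blA: "bounded_linear A" using lin
    by (intro bounded_linear_intro[of A "onorm N"]) (auto simp: linear_add linear_scale mult.commute)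
  hence blNA: "bounded_linear (N \<circ> A)" using bounded_linear_compose[OF N blA] by (simp add: o_def)
  define c where "c = onorm (N \<circ> A)"
  show c0: "onorm (N \<circ> adjoint N) \<ge> 0" using onorm_pos_le[OF blNA] by (simp add: A_def)
  have Ay: "norm (A y)^2 \<le> c * norm y^2" for y
  proof -
    have "norm (A y)^2 = inner (N (A y)) y" by (simp add: ad power2_norm_eq_inner)
    also have "\<dots> \<le> norm ((N \<circ> A) y) * norm y" by (simp add: norm_cauchy_schwarz)
    also have "\<dots> \<le> c * norm y * norm y"
      unfolding c_def by (intro mult_right_mono onorm[OF blNA]) simp
    finally show ?thesis by (simp add: power2_eq_square mult_ac)
  qed
  have "norm (N x)^2 \<le> (sqrt c * norm x)^2"
  proof -
    have "norm (N x)^2 = inner x (A (N x))" by (simp add: ad[symmetric] power2_norm_eq_inner)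
    also have "\<dots> \<le> norm x * norm (A (N x))" by (rule norm_cauchy_schwarz)
    also have "norm (A (N x)) \<le> sqrt c * norm (N x)"
      using Ay[of "N x"] c0 by (metis A_def c_def norm_ge_zero real_le_rsqrt real_sqrt_mult real_sqrt_abs abs_norm_cancel)
    hence "norm x * norm (A (N x)) \<le> norm x * (sqrt c * norm (N x))" by (simp add: mult_left_mono)
    finally have "norm (N x) * norm (N x) \<le> (sqrt c * norm x) * norm (N x)"
      by (simp add: power2_eq_square mult_ac)
    have cc: "c \<ge> 0" using c0 by (simp add: c_def A_def)
    hence "norm (N x) \<le> sqrt c * norm x" using \<open>norm (N x) * norm (N x) \<le> (sqrt c * norm x) * norm (N x)\<close>
      by (cases "norm (N x) = 0") (auto simp: mult_le_cancel_right)
    thus ?thesis using c0 by (intro power_mono) auto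
  qed
  thus "norm (N x) \<le> sqrt (onorm (N \<circ> adjoint N)) * norm x"
    using c0 by (simp add: A_def c_def power2_le_iff_abs_le)
qed



context sgpN
begin

definition beta :: "nat \<Rightarrow> real" where "beta i = onorm (N i \<circ> adjoint (N i))"

lemma Nb: "i < n \<Longrightarrow> norm (N i x) \<le> sqrt (beta i) * norm x"
  and beta_nonneg: "i < n \<Longrightarrow> beta i \<ge> 0"
  using adjoint_bound[of "N i"] Nbl by (auto simp: beta_def)

lemma PiE_valid: "m \<in> PiE {1..k} (\<lambda>_. {..<n}) \<Longrightarrow> valid m k"
  by (auto simp: valid_def PiE_def Pi_def)

lemma chain_sq_bound:
  assumes C: "bounded_linear C" and v: "valid m k" and s: "\<And>j. j \<le> k \<Longrightarrow> s j \<ge> 0"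
  shows "norm (C (opchain T N s m k y))^2 \<le> onorm C^2 * norm y^2 *
     (\<Prod>j\<le>k. M^2 * exp (-(s j * (2 * \<nu>)))) * (\<Prod>j\<in>{1..k}. beta (m j))"
proof -
  define P1 where "P1 = (\<Prod>j\<le>k. M * exp (- \<nu> * s j))"
  define P2 where "P2 = (\<Prod>j\<in>{1..k}. sqrt (beta (m j)))"
  have h: "norm (opchain T N s m k y) \<le> P1 * P2 * norm y"
    unfolding P1_def P2_def
    by (rule opchain_norm[OF v s]) (auto simp: Nb beta_nonneg)
  have "norm (C (opchain T N s m k y)) \<le> onorm C * norm (opchain T N s m k y)" by (rule onorm[OF C])
  also have "\<dots> \<le> onorm C * (P1 * P2 * norm y)" by (intro mult_left_mono h onorm_pos_le[OF C])
  finally have "norm (C (opchain T N s m k y))^2 \<le> (onorm C * (P1 * P2 * norm y))^2"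
    by (intro power_mono) auto
  also have "\<dots> = onorm C^2 * norm y^2 * P1^2 * P2^2" by (simp add: power_mult_distrib)
  also have "P1^2 = (\<Prod>j\<le>k. M^2 * exp (-(s j * (2 * \<nu>))))"
    unfolding P1_def prod_power_distrib
  proof (rule prod.cong)
    fix j show "(M * exp (- \<nu> * s j))^2 = M^2 * exp (-(s j * (2 * \<nu>)))"
      by (simp add: power_mult_distrib exp_double[symmetric] algebra_simps)
  qed simp
  also have "P2^2 = (\<Prod>j\<in>{1..k}. beta (m j))"
    unfolding P2_def prod_power_distrib
    using v by (intro prod.cong) (auto simp: valid_def beta_nonneg)
  finally show ?thesis .
qed

lemma Ok_eq: "Ok_inner C T N n k s y y = (\<Sum>m\<in>PiE {1..k} (\<lambda>_. {..<n}). norm (C (opchain T N s m k y))^2)"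
  by (simp add: Ok_inner_def power2_norm_eq_inner)

lemma sumprod: "(\<Sum>m\<in>PiE {1..k} (\<lambda>_. {..<n}). \<Prod>j\<in>{1..k}. beta (m j)) = (\<Sum>i<n. beta i)^k"
  using prod_sum_PiE[of "{1..k}" "\<lambda>_. {..<n}" "\<lambda>_ i. beta i"] by simp

lemma Ok_bound:
  assumes C: "bounded_linear C" and s: "\<And>j. j \<le> k \<Longrightarrow> s j \<ge> 0"
  shows "Ok_inner C T N n k s y y \<le> onorm C^2 * norm y^2 * (\<Sum>i<n. beta i)^k *
           (\<Prod>j\<le>k. M^2 * exp (-(s j * (2 * \<nu>))))"
proof -
  define A where "A = onorm C^2 * norm y^2 * (\<Prod>j\<le>k. M^2 * exp (-(s j * (2 * \<nu>))))"
  have "Ok_inner C T N n k s y y \<le> (\<Sum>m\<in>PiE {1..k} (\<lambda>_. {..<n}). A * (\<Prod>j\<in>{1..k}. beta (m j)))"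
    unfolding Ok_eq A_def using chain_sq_bound[OF C PiE_valid s] by (intro sum_mono) auto
  also have "\<dots> = A * (\<Sum>m\<in>PiE {1..k} (\<lambda>_. {..<n}). \<Prod>j\<in>{1..k}. beta (m j))"
    by (simp only: sum_distrib_left)
  also have "\<dots> = A * (\<Sum>i<n. beta i)^k" by (simp only: sumprod)
  finally show ?thesis by (simp add: A_def mult_ac)
qed

lemma Ok_nonneg: "Ok_inner C T N n k s y y \<ge> 0"
  unfolding Ok_eq by (intro sum_nonneg) auto

lemma Ok_meas:
  assumes C: "bounded_linear C"
  shows "(\<lambda>s. Ok_inner C T N n k s y y) \<in> borel_measurable (Pi\<^sub>M {..k} (\<lambda>_. R))"
proof -
  have h: "(\<lambda>s. C (opchain T N s m k y)) \<in> borel_measurable (Pi\<^sub>M {..k} (\<lambda>_. R))"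
    if "m \<in> PiE {1..k} (\<lambda>_. {..<n})" for m
  proof -
    have v: "valid m k" using that by (rule PiE_valid)
    have c: "(\<lambda>_. y) \<in> borel_measurable (Pi\<^sub>M {..k} (\<lambda>_. R))" by simp
    show ?thesis using measurable_compose[OF opchain_meas[OF v order_refl c] bl_meas[OF C]] .
  qed
  show ?thesis unfolding Ok_eq
    by (rule borel_measurable_sum, rule borel_measurable_power, rule measurable_compose[OF _ borel_measurable_norm], erule h)
qed

end


context sgpN
begin

lemma Ok_integrable_bound:
  assumes C: "bounded_linear C"
  shows "integrable (Pi\<^sub>M {..k} (\<lambda>_. R)) (\<lambda>s. Ok_inner C T N n k s y y)"
    "integral\<^sup>L (Pi\<^sub>M {..k} (\<lambda>_. R)) (\<lambda>s. Ok_inner C T N n k s y y) \<le>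
       onorm C^2 * norm y^2 * (\<Sum>i<n. beta i)^k * (M^2 / (2 * \<nu>))^(Suc k)"
proof -
  define K where "K = onorm C^2 * norm y^2 * (\<Sum>i<n. beta i)^k"
  define G where "G = (\<lambda>s. K * (\<Prod>j\<le>k. M^2 * exp (-(s j * (2 * \<nu>)))))"
  have u: "2 * \<nu> > 0" using nu by simp
  have intG: "integrable (Pi\<^sub>M {..k} (\<lambda>_. R)) G"
    unfolding G_def by (intro integrable_mult_right prod_int(1)[OF _ u]) simp
  have intG2: "integral\<^sup>L (Pi\<^sub>M {..k} (\<lambda>_. R)) G = K * (M^2 / (2 * \<nu>))^(Suc k)"
    unfolding G_def using prod_int(2)[OF _ u, of "{..k}" "M^2"] by simp
  have K0: "K \<ge> 0" unfolding K_def using beta_nonneg onorm_pos_le[OF C] by (auto intro!: mult_nonneg_nonneg zero_le_power sum_nonneg)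
  have bnd: "Ok_inner C T N n k s y y \<le> G s" if "s \<in> space (Pi\<^sub>M {..k} (\<lambda>_. R))" for s
    unfolding G_def K_def using Ok_bound[OF C, of k s y] space_PM[OF that] by (auto simp: less_imp_le mult_ac)
  have G0: "G s \<ge> 0" for s unfolding G_def using K0 by (auto intro!: mult_nonneg_nonneg prod_nonneg)
  show intO: "integrable (Pi\<^sub>M {..k} (\<lambda>_. R)) (\<lambda>s. Ok_inner C T N n k s y y)"
  proof (rule Bochner_Integration.integrable_bound[OF intG Ok_meas[OF C]])
    show "AE s in Pi\<^sub>M {..k} (\<lambda>_. R). norm (Ok_inner C T N n k s y y) \<le> norm (G s)"
    proof (intro AE_I2)
      fix s assume "s \<in> space (Pi\<^sub>M {..k} (\<lambda>_. R))"
      thus "norm (Ok_inner C T N n k s y y) \<le> norm (G s)"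
        using bnd[of s] G0[of s] Ok_nonneg[of C k s y] by simp
    qed
  qed
  have "integral\<^sup>L (Pi\<^sub>M {..k} (\<lambda>_. R)) (\<lambda>s. Ok_inner C T N n k s y y) \<le> integral\<^sup>L (Pi\<^sub>M {..k} (\<lambda>_. R)) G"
    using intO intG bnd by (intro integral_mono) auto
  thus "integral\<^sup>L (Pi\<^sub>M {..k} (\<lambda>_. R)) (\<lambda>s. Ok_inner C T N n k s y y) \<le>
       onorm C^2 * norm y^2 * (\<Sum>i<n. beta i)^k * (M^2 / (2 * \<nu>))^(Suc k)"
    using intG2 by (simp add: K_def)
qed

lemma kernel_a0:
  assumes C: "bounded_linear C"
    and small: "M\<^sup>2 * (sqrt (\<Sum>i<n. onorm (N i \<circ> adjoint (N i))))\<^sup>2 / (2 * \<nu>) < 1"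
    and y: "y \<in> obs_kernel C T N n"
  shows "integral\<^sup>L (Pi\<^sub>M {..k} (\<lambda>_. R)) (\<lambda>s. Ok_inner C T N n k s y y) = 0"
proof -
  define a where "a = (\<lambda>k. integral\<^sup>L (Pi\<^sub>M {..k} (\<lambda>_. R)) (\<lambda>s. Ok_inner C T N n k s y y))"
  define r where "r = M^2 / (2 * \<nu>)"
  define S where "S = (\<Sum>i<n. beta i)"
  define q where "q = S * r"
  define A where "A = onorm C^2 * norm y^2 * r"
  have sb: "S \<ge> 0" unfolding S_def using beta_nonneg by (auto intro: sum_nonneg)
  have qe: "q = M^2 * S / (2 * \<nu>)" unfolding q_def r_def by simp
  have q1: "q < 1" using small sb unfolding qe by (simp add: S_def beta_def)
  have q0: "q \<ge> 0" using sb nu by (simp add: q_def r_def)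
  have a0: "a k \<ge> 0" for k unfolding a_def by (intro integral_nonneg_AE AE_I2 Ok_nonneg)
  have ab: "a k \<le> A * q^k" for k
  proof -
    have "a k \<le> onorm C^2 * norm y^2 * (\<Sum>i<n. beta i)^k * (M^2 / (2 * \<nu>))^(Suc k)"
      unfolding a_def by (rule Ok_integrable_bound(2)[OF C])
    also have "\<dots> = onorm C^2 * norm y^2 * S^k * r^(Suc k)" by (simp only: S_def r_def)
    also have "\<dots> = A * q^k" unfolding A_def q_def
      by (simp only: power_mult_distrib power_Suc mult_ac)
    finally show ?thesis .
  qed
  have "summable (\<lambda>k. A * q^k)" using q0 q1 by (intro summable_mult summable_geometric) simp
  hence sa: "summable a"
  proof (rule summable_comparison_test'[where N=0])
    fix k :: nat show "norm (a k) \<le> A * q^k" using ab[of k] a0[of k] by simp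
  qed
  have "obs_gram C T N n y y = 0" using y by (simp add: obs_kernel_def)
  hence "suminf a = 0" by (simp add: obs_gram_def a_def)
  hence "\<forall>k. a k = 0" using suminf_eq_zero_iff[OF sa] a0 by simp
  thus ?thesis by (simp add: a_def)
qed

end


context sgpN
begin

lemma chain_zero_pos:
  assumes C: "bounded_linear C"
    and a0: "integral\<^sup>L (Pi\<^sub>M {..k} (\<lambda>_. R)) (\<lambda>s. Ok_inner C T N n k s y y) = 0"
    and v: "valid m k" and s: "\<And>j. j \<le> k \<Longrightarrow> s j > 0"
  shows "C (opchain T N s m k y) = 0"
proof (rule ccontr)
  assume nz: "C (opchain T N s m k y) \<noteq> 0"
  define F where "F = (\<lambda>s. norm (C (opchain T N s m k y)))"
  have Fs: "F s \<noteq> 0" using nz by (simp add: F_def)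
  define m' where "m' = restrict m {1..k}"
  have m'P: "m' \<in> PiE {1..k} (\<lambda>_. {..<n})" using v by (auto simp: m'_def valid_def)
  have eqm: "opchain T N s' m' k = opchain T N s' m k" for s'
    by (rule opchain_cong) (auto simp: m'_def)
  have "\<exists>\<rho>>0. \<forall>s'. (\<forall>j\<le>k. s' j > 0 \<and> \<bar>s' j - s j\<bar> < \<rho>) \<longrightarrow> F s' \<noteq> 0"
  proof (rule ccontr)
    assume "\<not> ?thesis"
    hence "\<forall>p. \<exists>s'. (\<forall>j\<le>k. s' j > 0 \<and> \<bar>s' j - s j\<bar> < inverse (real (Suc p))) \<and> F s' = 0"
      by (metis of_nat_0_less_iff positive_imp_inverse_positive zero_less_Suc)
    then obtain sp where sp: "\<And>p j. j \<le> k \<Longrightarrow> sp p j > 0"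
      "\<And>p j. j \<le> k \<Longrightarrow> \<bar>sp p j - s j\<bar> < inverse (real (Suc p))" "\<And>p. F (sp p) = 0"
      by metis
    have conv: "(\<lambda>p. sp p j) \<longlonglongrightarrow> s j" if j: "j \<le> k" for j
    proof -
      have "(\<lambda>p. sp p j - s j) \<longlonglongrightarrow> 0"
        by (rule Lim_null_comparison[OF always_eventually LIMSEQ_inverse_real_of_nat])
           (use sp(2)[OF j] in \<open>auto intro: less_imp_le\<close>)
      thus ?thesis by (rule LIM_zero_cancel)
    qed
    have "(\<lambda>p. opchain T N (sp p) m k y) \<longlonglongrightarrow> opchain T N s m k y"
      using v s sp(1) conv by (intro opchain_cont) (auto intro: less_imp_le)
    hence "(\<lambda>p. F (sp p)) \<longlonglongrightarrow> F s" unfolding F_def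
      by (intro tendsto_norm bounded_linear.tendsto[OF C])
    hence "(\<lambda>p. 0) \<longlonglongrightarrow> F s" using sp(3) by simp
    hence "F s = 0" using LIMSEQ_unique tendsto_const by blast
    thus False using Fs by simp
  qed
  then obtain \<rho> where \<rho>: "\<rho> > 0" "\<And>s'. (\<forall>j\<le>k. s' j > 0 \<and> \<bar>s' j - s j\<bar> < \<rho>) \<Longrightarrow> F s' \<noteq> 0"
    by blast
  define a where "a = (\<lambda>j. max 0 (s j - \<rho>))"
  define b where "b = (\<lambda>j. s j + \<rho>)"
  define B where "B = PiE {..k} (\<lambda>j. {a j<..<b j})"
  have ab: "a j < b j" "a j \<ge> 0" if "j \<le> k" for j using s[OF that] \<rho>(1) by (auto simp: a_def b_def)
  have Iset: "{a j<..<b j} \<in> sets R" if "j \<le> k" for j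
    using ab[OF that] by (subst sets_restrict_space_iff) auto
  have Bsets: "B \<in> sets (Pi\<^sub>M {..k} (\<lambda>_. R))" unfolding B_def
    by (rule sets_PiM_I_finite) (auto intro: Iset)
  have Okpos: "Ok_inner C T N n k s' y y \<noteq> 0" if "s' \<in> B" for s'
  proof -
    have "\<forall>j\<le>k. s' j > 0 \<and> \<bar>s' j - s j\<bar> < \<rho>"
    proof (intro allI impI)
      fix j assume j: "j \<le> k"
      hence "s' j \<in> {a j<..<b j}" using that by (auto simp: B_def)
      thus "s' j > 0 \<and> \<bar>s' j - s j\<bar> < \<rho>" using ab[OF j] by (auto simp: a_def b_def)
    qed
    hence "F s' \<noteq> 0" by (rule \<rho>(2))
    hence "0 < norm (C (opchain T N s' m' k y))^2" by (simp add: F_def eqm)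
    also have "\<dots> \<le> Ok_inner C T N n k s' y y" unfolding Ok_eq
      by (rule member_le_sum[OF m'P]) (auto intro: finite_PiE)
    finally show ?thesis by simp
  qed
  have "AE s in Pi\<^sub>M {..k} (\<lambda>_. R). Ok_inner C T N n k s y y = 0"
    using integral_nonneg_eq_0_iff_AE[OF Ok_integrable_bound(1)[OF C, of k y] AE_I2[OF Ok_nonneg]] a0 by simp
  then obtain Nn where Nn: "{x \<in> space (Pi\<^sub>M {..k} (\<lambda>_. R)). \<not> Ok_inner C T N n k x y y = 0} \<subseteq> Nn"
    "emeasure (Pi\<^sub>M {..k} (\<lambda>_. R)) Nn = 0" "Nn \<in> sets (Pi\<^sub>M {..k} (\<lambda>_. R))"
    by (rule AE_E)
  have "B \<subseteq> Nn" using Nn(1) Okpos sets.sets_into_space[OF Bsets] by blast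
  hence "emeasure (Pi\<^sub>M {..k} (\<lambda>_. R)) B \<le> 0" using Nn(2,3) emeasure_mono by metis
  moreover have "emeasure (Pi\<^sub>M {..k} (\<lambda>_. R)) B = ennreal (\<Prod>j\<le>k. b j - a j)"
  proof -
    interpret product_sigma_finite "\<lambda>_::nat. R" by (rule psf)
    have "emeasure (Pi\<^sub>M {..k} (\<lambda>_. R)) B = (\<Prod>j\<le>k. emeasure R {a j<..<b j})"
      unfolding B_def by (rule emeasure_PiM) (auto intro: Iset)
    also have "\<dots> = (\<Prod>j\<le>k. ennreal (b j - a j))"
    proof (rule prod.cong)
      fix j assume "j \<in> {..k}"
      hence j: "j \<le> k" by simp
      have "emeasure R {a j<..<b j} = emeasure lborel {a j<..<b j}"
        using ab[OF j] by (subst emeasure_restrict_space) auto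
      thus "emeasure R {a j<..<b j} = ennreal (b j - a j)" using ab[OF j] by simp
    qed simp
    also have "\<dots> = ennreal (\<Prod>j\<le>k. b j - a j)"
      using ab by (intro prod_ennreal) (auto intro: less_imp_le)
    finally show ?thesis .
  qed
  ultimately have "ennreal (\<Prod>j\<le>k. b j - a j) = 0" by (metis le_zero_eq)
  hence "(\<Prod>j\<le>k. b j - a j) \<le> 0" by (simp only: ennreal_eq_0_iff)
  moreover have "(\<Prod>j\<le>k. b j - a j) > 0" using ab by (intro prod_pos) auto
  ultimately show False by linarith
qed

lemma chain_zero:
  assumes C: "bounded_linear C"
    and a0: "integral\<^sup>L (Pi\<^sub>M {..k} (\<lambda>_. R)) (\<lambda>s. Ok_inner C T N n k s y y) = 0"
    and v: "valid m k" and s: "\<And>j. j \<le> k \<Longrightarrow> s j \<ge> 0"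
  shows "C (opchain T N s m k y) = 0"
proof -
  define sp where "sp = (\<lambda>p j. s j + inverse (real (Suc p)))"
  have pos: "sp p j > 0" if "j \<le> k" for p j using s[OF that] by (simp add: sp_def add_nonneg_pos)
  have conv: "(\<lambda>p. sp p j) \<longlonglongrightarrow> s j" for j
    unfolding sp_def using tendsto_add[OF tendsto_const LIMSEQ_inverse_real_of_nat, of "s j"] by simp
  have lim: "(\<lambda>p. C (opchain T N (sp p) m k y)) \<longlonglongrightarrow> C (opchain T N s m k y)"
    using v s pos conv by (intro bounded_linear.tendsto[OF C] opchain_cont) (auto intro: less_imp_le)
  have z: "C (opchain T N (sp p) m k y) = 0" for p
    by (rule chain_zero_pos[OF C a0 v pos])
  have "(\<lambda>p. 0) \<longlonglongrightarrow> C (opchain T N s m k y)" using lim unfolding z .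
  thus ?thesis using LIMSEQ_unique[OF tendsto_const] by metis
qed

end


lemma le_half_pow:
  fixes x c :: real
  assumes "x \<ge> 0" "\<And>p. x \<le> c / 2^p"
  shows "x = 0"
proof (rule ccontr)
  assume "x \<noteq> 0"
  hence x: "x > 0" using assms(1) by simp
  obtain p where p: "c / x < 2^p" using real_arch_pow[of 2 "c / x"] by auto
  hence "c < x * 2^p" using x by (simp add: field_simps)
  hence "c / 2^p < x" by (simp add: field_simps)
  thus False using assms(2)[of p] by simp
qed

lemma u_sub:
  fixes u :: "real \<Rightarrow> real"
  assumes int: "integrable (lebesgue_on {0..T0}) (\<lambda>t. (u t)\<^sup>2)" and t: "t \<le> T0"
  shows "integrable (lebesgue_on {0..t}) (\<lambda>r. (u r)\<^sup>2)"
    "integral\<^sup>L (lebesgue_on {0..t}) (\<lambda>r. (u r)\<^sup>2) \<le> integral\<^sup>L (lebesgue_on {0..T0}) (\<lambda>r. (u r)\<^sup>2)"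
proof -
  have i0: "integrable lebesgue (\<lambda>r. indicator {0..T0} r *\<^sub>R (u r)\<^sup>2)"
    using int by (subst (asm) integrable_restrict_space) auto
  have i1: "integrable lebesgue (\<lambda>r. indicator {0..t} r *\<^sub>R (indicator {0..T0} r *\<^sub>R (u r)\<^sup>2))"
    by (rule integrable_mult_indicator[OF _ i0]) simp
  have eq: "indicator {0..t} r *\<^sub>R (indicator {0..T0} r *\<^sub>R (u r)\<^sup>2) = indicator {0..t} r *\<^sub>R (u r)\<^sup>2" for r :: real
    using t by (auto split: split_indicator)
  have i2: "integrable lebesgue (\<lambda>r. indicator {0..t} r *\<^sub>R (u r)\<^sup>2)" using i1 unfolding eq .
  show "integrable (lebesgue_on {0..t}) (\<lambda>r. (u r)\<^sup>2)"
    using i2 by (subst integrable_restrict_space) auto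
  have "integral\<^sup>L (lebesgue_on {0..t}) (\<lambda>r. (u r)\<^sup>2) = integral\<^sup>L lebesgue (\<lambda>r. indicator {0..t} r *\<^sub>R (u r)\<^sup>2)"
    by (subst integral_restrict_space) auto
  also have "\<dots> \<le> integral\<^sup>L lebesgue (\<lambda>r. indicator {0..T0} r *\<^sub>R (u r)\<^sup>2)"
    using i2 i0 t by (intro integral_mono) (auto split: split_indicator)
  also have "\<dots> = integral\<^sup>L (lebesgue_on {0..T0}) (\<lambda>r. (u r)\<^sup>2)"
    by (subst integral_restrict_space) auto
  finally show "integral\<^sup>L (lebesgue_on {0..t}) (\<lambda>r. (u r)\<^sup>2) \<le> integral\<^sup>L (lebesgue_on {0..T0}) (\<lambda>r. (u r)\<^sup>2)" .
qed

lemma ind_int: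
  fixes t \<tau> \<delta> :: real
  assumes "\<tau> \<ge> 0" "t \<le> \<tau> + \<delta>" "\<delta> \<ge> 0"
  shows "integrable (lebesgue_on {0..t}) (indicator {\<tau>..t} :: real \<Rightarrow> real)"
    "integral\<^sup>L (lebesgue_on {0..t}) (indicator {\<tau>..t} :: real \<Rightarrow> real) \<le> \<delta>"
proof -
  have sub: "{\<tau>..t} \<subseteq> {0..t}" using assms by auto
  have em: "emeasure (lebesgue_on {0..t}) {\<tau>..t} = emeasure lebesgue {\<tau>..t}"
    using sub by (subst emeasure_restrict_space) auto
  show "integrable (lebesgue_on {0..t}) (indicator {\<tau>..t} :: real \<Rightarrow> real)"
    using sub em by (intro integrable_real_indicator) (auto simp: sets_restrict_space_iff emeasure_lborel_Icc_eq)
  have "integral\<^sup>L (lebesgue_on {0..t}) (indicator {\<tau>..t} :: real \<Rightarrow> real) = measure (lebesgue_on {0..t}) {\<tau>..t}"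
    using sub by (simp only: Bochner_Integration.integral_indicator space_lebesgue_on Int_absorb2)
  also have "\<dots> = measure lebesgue {\<tau>..t}" using sub by (subst measure_restrict_space) auto
  also have "\<dots> = (if \<tau> \<le> t then t - \<tau> else 0)" by simp
  also have "\<dots> \<le> \<delta>" using assms by auto
  finally show "integral\<^sup>L (lebesgue_on {0..t}) (indicator {\<tau>..t} :: real \<Rightarrow> real) \<le> \<delta>" .
qed



lemma abs_le_L: "(L::real) > 0 \<Longrightarrow> \<bar>x\<bar> \<le> L + x^2 / L"
proof -
  assume L: "L > 0"
  have "0 \<le> (\<bar>x\<bar> - L)^2" by simp
  hence "2 * L * \<bar>x\<bar> \<le> x^2 + L^2" by (simp add: power2_eq_square algebra_simps)
  hence "\<bar>x\<bar> \<le> (x^2 + L^2) / (2 * L)" using L by (simp add: field_simps)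
  also have "\<dots> \<le> L + x^2 / L" using L by (simp add: field_simps power2_eq_square)
  finally show ?thesis .
qed

lemma quarter: "(X::real) * (4 * (a + 1)) = a \<Longrightarrow> a \<ge> 0 \<Longrightarrow> X \<le> 1/4"
proof -
  assume e: "X * (4 * (a + 1)) = a" and a: "a \<ge> 0"
  have "(1 - 4 * X) * (a + 1) = (a + 1) - X * (4 * (a + 1))" by (simp add: algebra_simps)
  also have "\<dots> = 1" using e by simp
  finally have "(1 - 4 * X) * (a + 1) > 0" by simp
  hence "1 - 4 * X > 0" using a by (simp add: zero_less_mult_iff)
  thus ?thesis by simp
qed

theorem lemma2p4:
  fixes T :: "real \<Rightarrow> 'x::{real_inner, polish_space} \<Rightarrow> 'x"
    and N :: "nat \<Rightarrow> 'x \<Rightarrow> 'x"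
    and C :: "'x \<Rightarrow> 'h::{real_inner, polish_space}"
    and n :: nat and M \<nu> T0 :: real
    and u :: "nat \<Rightarrow> real \<Rightarrow> real"
    and \<phi> :: "real \<Rightarrow> 'x" and \<phi>0 :: 'x
  assumes semigroup: "C0_semigroup T"
    and bound: "\<forall>t\<ge>0. onorm (T t) \<le> M * exp (- \<nu> * t)"
    and M: "M \<ge> 1" and \<nu>: "\<nu> > 0"
    and N: "\<forall>i<n. bounded_linear (N i)"
    and C: "bounded_linear C"
    and small: "M\<^sup>2 * (sqrt (\<Sum>i<n. onorm (N i \<circ> adjoint (N i))))\<^sup>2 / (2 * \<nu>) < 1"
    and \<phi>0: "\<phi>0 \<in> obs_kernel C T N n"
    and T0: "T0 > 0"
    and u_meas: "\<forall>i<n. u i \<in> borel_measurable (lebesgue_on {0..T0})"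
    and u_L2: "\<forall>i<n. integrable (lebesgue_on {0..T0}) (\<lambda>t. (u i t)\<^sup>2)"
    and \<phi>_cont: "continuous_on {0..T0} \<phi>"
    and mild: "\<forall>t\<in>{0..T0}. \<phi> t = T t \<phi>0 +
        (\<integral>s. T (t - s) (\<Sum>i<n. u i s *\<^sub>R N i (\<phi> s)) \<partial>(lebesgue_on {0..t}))"
  shows "\<forall>t\<in>{0..T0}. C (\<phi> t) = 0"
proof -
  interpret sgpN T M \<nu> N n
    unfolding sgpN_def sgp_def sgpN_axioms_def using semigroup bound M \<nu> N by blast
  have Z0: "C (opchain T N s m k \<phi>0) = 0" if "valid m k" "\<And>j. j \<le> k \<Longrightarrow> s j \<ge> 0" for k m s
    using chain_zero[OF C kernel_a0[OF C small \<phi>0] that] .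
  define B where "B = 1 + (\<Sum>i<n. onorm (N i))"
  have onN: "onorm (N i) \<ge> 0" if "i < n" for i using onorm_pos_le N that by blast
  have "(\<Sum>i<n. onorm (N i)) \<ge> 0" by (rule sum_nonneg) (simp add: onN)
  hence B0: "B > 0" unfolding B_def by linarith
  have NB: "norm (N i x) \<le> B * norm x" if i: "i < n" for i x
  proof -
    have "onorm (N i) \<le> (\<Sum>i<n. onorm (N i))" using i onN by (intro member_le_sum) auto
    hence "onorm (N i) \<le> B" unfolding B_def by simp
    thus ?thesis using onorm[of "N i" x] N i by (meson mult_right_mono norm_ge_zero order_trans)
  qed
  define W where "W = (\<lambda>k::nat. M^(Suc k) * B^k)"
  have W0: "W k > 0" for k unfolding W_def using M B0 by simp
  have WS: "W (Suc k) = W k * (M * B)" for k unfolding W_def by (simp add: mult_ac)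
  have gen: "norm (C (opchain T N s m k x)) \<le> onorm C * W k * norm x"
    if v: "valid m k" and s: "\<And>j. j \<le> k \<Longrightarrow> s j \<ge> 0" for k m s x
  proof -
    have h: "norm (opchain T N s m k x) \<le> (\<Prod>j\<le>k. M * exp (- \<nu> * s j)) * (\<Prod>j\<in>{1..k}. B) * norm x"
      by (rule opchain_norm[OF v s]) (use NB B0 in auto)
    have p1: "(\<Prod>j\<le>k. M * exp (- \<nu> * s j)) \<le> (\<Prod>j\<le>k. M)"
    proof (rule prod_mono)
      fix j assume "j \<in> {..k}"
      hence "s j \<ge> 0" using s by simp
      hence "exp (- \<nu> * s j) \<le> 1" using \<nu> by simp
      thus "0 \<le> M * exp (- \<nu> * s j) \<and> M * exp (- \<nu> * s j) \<le> M" using M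
        by (simp add: mult_le_cancel_left1)
    qed
    have "(\<Prod>j\<le>k. M * exp (- \<nu> * s j)) * (\<Prod>j\<in>{1..k}. B) * norm x \<le> W k * norm x"
      unfolding W_def using p1 B0 by (intro mult_right_mono) (auto simp: mult_right_mono)
    hence "norm (opchain T N s m k x) \<le> W k * norm x" using h by linarith
    hence "onorm C * norm (opchain T N s m k x) \<le> onorm C * (W k * norm x)"
      by (intro mult_left_mono onorm_pos_le[OF C])
    thus ?thesis using onorm[OF C, of "opchain T N s m k x"] by (simp add: mult_ac)
  qed
  have "bounded (\<phi> ` {0..T0})"
    by (intro compact_imp_bounded compact_continuous_image \<phi>_cont compact_Icc)
  then obtain \<Phi> where \<Phi>: "\<Phi> > 0" "\<And>t. t \<in> {0..T0} \<Longrightarrow> norm (\<phi> t) \<le> \<Phi>"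
    unfolding bounded_pos by auto
  define D where "D = onorm C * \<Phi>"
  have D0: "D \<ge> 0" unfolding D_def using onorm_pos_le[OF C] \<Phi> by simp
  have gen2: "norm (C (opchain T N s m k (\<phi> t))) \<le> W k * D"
    if "valid m k" "\<And>j. j \<le> k \<Longrightarrow> s j \<ge> 0" "t \<in> {0..T0}" for k m s t
  proof -
    have "norm (C (opchain T N s m k (\<phi> t))) \<le> onorm C * W k * norm (\<phi> t)" by (rule gen[OF that(1,2)])
    also have "\<dots> \<le> onorm C * W k * \<Phi>"
      using \<Phi>(2)[OF that(3)] W0[of k] onorm_pos_le[OF C] by (intro mult_left_mono) (auto intro: less_imp_le)
    finally show ?thesis by (simp add: D_def mult_ac)
  qed
  define U where "U = (\<Sum>i<n. integral\<^sup>L (lebesgue_on {0..T0}) (\<lambda>t. (u i t)\<^sup>2))"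
  have U0: "U \<ge> 0" unfolding U_def by (intro sum_nonneg integral_nonneg) auto
  define L where "L = 4 * M * B * (U + 1)"
  have L0: "L > 0" unfolding L_def using M B0 U0 by (simp add: add_nonneg_pos)
  define \<delta> where "\<delta> = inverse (4 * M * B * (real n + 1) * L)"
  have pos: "4 * M * B * (real n + 1) * L > 0" using M B0 L0 by simp
  have \<delta>0: "\<delta> > 0" unfolding \<delta>_def using pos by (simp only: inverse_positive_iff_positive)
  have h\<delta>: "(4 * M * B * (real n + 1) * L) * \<delta> = 1" unfolding \<delta>_def using pos by (intro right_inverse) (metis less_irrefl)
  have hL: "L * inverse L = 1" using L0 by simp
  have key: "M * B * (real n * L * \<delta> + U / L) \<le> 1 / 2"
  proof -
    have ea: "(M * B * (real n * L * \<delta>)) * (4 * (real n + 1)) = real n"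
    proof -
      have "(M * B * (real n * L * \<delta>)) * (4 * (real n + 1)) = real n * ((4 * M * B * (real n + 1) * L) * \<delta>)"
        by (simp only: mult_ac)
      thus ?thesis using h\<delta> by simp
    qed
    have eb: "(M * B * (U / L)) * (4 * (U + 1)) = U"
    proof -
      have "(M * B * (U / L)) * (4 * (U + 1)) = U * ((4 * M * B * (U + 1)) * inverse L)"
        by (simp only: divide_inverse mult_ac)
      also have "\<dots> = U * (L * inverse L)" by (simp only: L_def)
      finally show ?thesis using hL by simp
    qed
    have "M * B * (real n * L * \<delta>) \<le> 1/4" by (rule quarter[OF ea]) simp
    moreover have "M * B * (U / L) \<le> 1/4" by (rule quarter[OF eb U0])
    ultimately show ?thesis by (simp only: distrib_left)
  qed
  define Zt where "Zt = (\<lambda>t. \<forall>k m s. valid m k \<longrightarrow> (\<forall>j\<le>k. s j \<ge> 0) \<longrightarrow> C (opchain T N s m k (\<phi> t)) = 0)"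
  have step: "\<forall>t\<in>{0..T0}. t \<le> \<tau> + \<delta> \<longrightarrow> Zt t"
    if \<tau>0: "\<tau> \<ge> 0" and IHt: "\<forall>r\<in>{0..T0}. r < \<tau> \<longrightarrow> Zt r" for \<tau>
  proof -
    have Q: "\<forall>t\<in>{0..T0}. t \<le> \<tau> + \<delta> \<longrightarrow> (\<forall>k m s. valid m k \<longrightarrow> (\<forall>j\<le>k. s j \<ge> 0) \<longrightarrow>
               norm (C (opchain T N s m k (\<phi> t))) \<le> W k * D / 2^p)" for p
    proof (induction p)
      case 0 thus ?case using gen2 by simp
    next
      case (Suc p)
      show ?case
      proof (intro ballI impI allI)
        fix t k m and s :: "nat \<Rightarrow> real" assume t: "t \<in> {0..T0}" "t \<le> \<tau> + \<delta>" and v: "valid m k" and s: "\<forall>j\<le>k. 0 \<le> s j"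
        have s': "\<And>j. j \<le> k \<Longrightarrow> s j \<ge> 0" using s by simp
        have t0: "0 \<le> t" "t \<le> T0" using t(1) by auto
        define Lf where "Lf = (\<lambda>x. C (opchain T N s m k x))"
        have blL: "bounded_linear Lf" unfolding Lf_def
          using bounded_linear_compose[OF C opchain_bl[OF v s']] .
        define f where "f = (\<lambda>r. T (t - r) (\<Sum>i<n. u i r *\<^sub>R N i (\<phi> r)))"
        have \<phi>t: "\<phi> t = T t \<phi>0 + integral\<^sup>L (lebesgue_on {0..t}) f" using mild t(1) unfolding f_def by blast
        have LT: "Lf (T t \<phi>0) = 0"
        proof -
          have "Lf (T t \<phi>0) = C (opchain T N (s(k := s k + t)) m k \<phi>0)"
            unfolding Lf_def using opchain_shift[of s k t m \<phi>0] s' t0 by simp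
          also have "\<dots> = 0" by (rule Z0[OF v]) (use s' t0 in auto)
          finally show ?thesis .
        qed
        have Lphi: "Lf (\<phi> t) = Lf (integral\<^sup>L (lebesgue_on {0..t}) f)"
          using \<phi>t LT by (simp add: real_vector.linear_add[OF bounded_linear.linear[OF blL]])
        define c where "c = W (Suc k) * D / 2^p"
        have c0: "c \<ge> 0" unfolding c_def using W0[of "Suc k"] D0 by simp
        have cW: "c = W k * D / 2^p * (M * B)" unfolding c_def WS by (simp add: mult_ac)
        define g where "g = (\<lambda>r. c * (\<Sum>i<n. L * indicator {\<tau>..t} r + (u i r)\<^sup>2 / L))"
        have intu: "integrable (lebesgue_on {0..t}) (\<lambda>r. (u i r)\<^sup>2)" if "i < n" for i
          using u_sub(1)[OF _ t0(2)] u_L2 that by blast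
        have intI: "integrable (lebesgue_on {0..t}) (indicator {\<tau>..t} :: real \<Rightarrow> real)"
          by (rule ind_int(1)[OF \<tau>0 t(2) less_imp_le[OF \<delta>0]])
        have intgi: "integrable (lebesgue_on {0..t}) (\<lambda>r. L * indicator {\<tau>..t} r + (u i r)\<^sup>2 / L)" if "i < n" for i
          using intu[OF that] intI by (intro Bochner_Integration.integrable_add integrable_mult_right integrable_divide_zero)
        have intg: "integrable (lebesgue_on {0..t}) g" unfolding g_def
          using intgi by (intro integrable_mult_right Bochner_Integration.integrable_sum) auto
        have intg_val: "integral\<^sup>L (lebesgue_on {0..t}) g \<le> c * (real n * L * \<delta> + U / L)"
        proof -
          have "integral\<^sup>L (lebesgue_on {0..t}) g =
              c * (\<Sum>i<n. integral\<^sup>L (lebesgue_on {0..t}) (\<lambda>r. L * indicator {\<tau>..t} r + (u i r)\<^sup>2 / L))"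
            unfolding g_def using intgi by (simp add: Bochner_Integration.integral_sum)
          also have "\<dots> = c * (\<Sum>i<n. L * integral\<^sup>L (lebesgue_on {0..t}) (indicator {\<tau>..t} :: real \<Rightarrow> real)
                 + integral\<^sup>L (lebesgue_on {0..t}) (\<lambda>r. (u i r)\<^sup>2) / L)"
            using intu intI by (intro arg_cong[where f="\<lambda>x. c * x"] sum.cong refl) (simp add: Bochner_Integration.integral_add)
          also have "\<dots> \<le> c * (\<Sum>i<n. L * \<delta> + integral\<^sup>L (lebesgue_on {0..T0}) (\<lambda>r. (u i r)\<^sup>2) / L)"
          proof (rule mult_left_mono[OF sum_mono c0])
            fix i assume "i \<in> {..<n}"
            hence i: "i < n" by simp
            have a: "L * integral\<^sup>L (lebesgue_on {0..t}) (indicator {\<tau>..t} :: real \<Rightarrow> real) \<le> L * \<delta>"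
              using ind_int(2)[OF \<tau>0 t(2) less_imp_le[OF \<delta>0]] L0 by simp
            have b: "integral\<^sup>L (lebesgue_on {0..t}) (\<lambda>r. (u i r)\<^sup>2) / L \<le> integral\<^sup>L (lebesgue_on {0..T0}) (\<lambda>r. (u i r)\<^sup>2) / L"
              using u_sub(2)[OF _ t0(2)] u_L2 i L0 by (simp add: divide_right_mono)
            show "L * integral\<^sup>L (lebesgue_on {0..t}) (indicator {\<tau>..t} :: real \<Rightarrow> real) + integral\<^sup>L (lebesgue_on {0..t}) (\<lambda>r. (u i r)\<^sup>2) / L
                  \<le> L * \<delta> + integral\<^sup>L (lebesgue_on {0..T0}) (\<lambda>r. (u i r)\<^sup>2) / L"
              using a b by linarith
          qed
          also have "\<dots> = c * (real n * L * \<delta> + U / L)"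
            unfolding U_def by (simp add: sum.distrib sum_divide_distrib)
          finally show ?thesis .
        qed
        have pw: "norm (Lf (f r)) \<le> g r" if r: "r \<in> space (lebesgue_on {0..t})" for r
        proof -
          have r0: "0 \<le> r" "r \<le> t" "r \<in> {0..T0}" using r t0 by auto
          define s2 where "s2 = s(k := s k + (t - r), Suc k := 0)"
          have s20: "s2 j \<ge> 0" if "j \<le> Suc k" for j unfolding s2_def using s' r0 that by auto
          have v2: "valid (m(Suc k := i)) (Suc k)" if "i < n" for i
            using v that by (auto simp: valid_def)
          have bl2: "bounded_linear (\<lambda>x. Lf (T (t - r) x))"
            using bounded_linear_compose[OF blL bl] r0 by simp
          have "Lf (f r) = (\<Sum>i<n. Lf (T (t - r) (u i r *\<^sub>R N i (\<phi> r))))"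
            unfolding f_def by (rule real_vector.linear_sum[OF bounded_linear.linear[OF bl2]])
          also have "\<dots> = (\<Sum>i<n. u i r *\<^sub>R C (opchain T N s2 (m(Suc k := i)) (Suc k) (\<phi> r)))"
          proof (rule sum.cong[OF refl])
            fix i
            have "Lf (T (t - r) (u i r *\<^sub>R N i (\<phi> r))) = u i r *\<^sub>R Lf (T (t - r) (N i (\<phi> r)))"
              using linear_simps(5)[OF bl2] by simp
            also have "Lf (T (t - r) (N i (\<phi> r))) = C (opchain T N s2 (m(Suc k := i)) (Suc k) (\<phi> r))"
              unfolding Lf_def s2_def using opchain_ext[of s k "t - r" m i "\<phi> r"] s' r0 by simp
            finally show "Lf (T (t - r) (u i r *\<^sub>R N i (\<phi> r))) = u i r *\<^sub>R C (opchain T N s2 (m(Suc k := i)) (Suc k) (\<phi> r))" .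
          qed
          finally have eq: "Lf (f r) = (\<Sum>i<n. u i r *\<^sub>R C (opchain T N s2 (m(Suc k := i)) (Suc k) (\<phi> r)))" .
          have nb: "norm (Lf (f r)) \<le> (\<Sum>i<n. \<bar>u i r\<bar> * norm (C (opchain T N s2 (m(Suc k := i)) (Suc k) (\<phi> r))))"
            unfolding eq by (rule order_trans[OF norm_sum]) simp
          have gi0: "0 \<le> L * indicator {\<tau>..t} r + (u i r)\<^sup>2 / L" for i using L0 by simp
          show ?thesis
          proof (cases "r < \<tau>")
            case True
            hence "Zt r" using IHt r0 by blast
            hence "C (opchain T N s2 (m(Suc k := i)) (Suc k) (\<phi> r)) = 0" if "i < n" for i
              unfolding Zt_def using v2[OF that] s20 by blast
            hence "norm (Lf (f r)) \<le> 0" using nb by simp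
            also have "0 \<le> g r" unfolding g_def using c0 gi0 by (intro mult_nonneg_nonneg sum_nonneg) auto
            finally show ?thesis .
          next
            case False
            hence ind: "indicator {\<tau>..t} r = (1::real)" using r0 by simp
            have "norm (Lf (f r)) \<le> (\<Sum>i<n. \<bar>u i r\<bar> * c)"
            proof (rule order_trans[OF nb], rule sum_mono)
              fix i assume "i \<in> {..<n}"
              hence i: "i < n" by simp
              have "norm (C (opchain T N s2 (m(Suc k := i)) (Suc k) (\<phi> r))) \<le> W (Suc k) * D / 2^p"
              proof -
                have rle: "r \<le> \<tau> + \<delta>" using r0(2) t(2) by simp
                have IHr: "\<forall>k m s. valid m k \<longrightarrow> (\<forall>j\<le>k. 0 \<le> s j) \<longrightarrow>
                    norm (C (opchain T N s m k (\<phi> r))) \<le> W k * D / 2^p"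
                  by (rule mp[OF bspec[OF Suc.IH r0(3)] rle])
                have s2all: "\<forall>j\<le>Suc k. 0 \<le> s2 j" using s20 by simp
                show ?thesis using IHr[rule_format, OF v2[OF i] s20] .
              qed
              thus "\<bar>u i r\<bar> * norm (C (opchain T N s2 (m(Suc k := i)) (Suc k) (\<phi> r))) \<le> \<bar>u i r\<bar> * c"
                unfolding c_def by (intro mult_left_mono) auto
            qed
            also have "\<dots> \<le> (\<Sum>i<n. c * (L * indicator {\<tau>..t} r + (u i r)\<^sup>2 / L))"
              using abs_le_L[OF L0] c0 unfolding ind by (intro sum_mono) (simp add: mult_left_mono mult.commute)
            also have "\<dots> = g r" unfolding g_def by (simp add: sum_distrib_left)
            finally show ?thesis .
          qed
        qed
        have fin: "W k * D / 2^p * (M * B * (real n * L * \<delta> + U / L)) \<le> W k * D / 2^Suc p"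
        proof -
          have "W k * D / 2^p \<ge> 0" using W0[of k] D0 by simp
          hence "W k * D / 2^p * (M * B * (real n * L * \<delta> + U / L)) \<le> W k * D / 2^p * (1/2)"
            using key by (intro mult_left_mono) auto
          thus ?thesis by simp
        qed
        show "norm (C (opchain T N s m k (\<phi> t))) \<le> W k * D / 2^Suc p"
        proof (cases "integrable (lebesgue_on {0..t}) f")
          case False
          hence "Lf (\<phi> t) = 0" using Lphi not_integrable_integral_eq[OF False] real_vector.linear_0[OF bounded_linear.linear[OF blL]] by simp
          thus ?thesis using W0[of k] D0 by (simp add: Lf_def)
        next
          case True
          have intLf: "integrable (lebesgue_on {0..t}) (\<lambda>r. Lf (f r))"
            by (rule integrable_bounded_linear[OF blL True])
          define w where "w = integral\<^sup>L (lebesgue_on {0..t}) (\<lambda>r. Lf (f r))"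
          have wL: "Lf (\<phi> t) = w" unfolding w_def using Lphi integral_bounded_linear[OF blL True] by simp
          have blw: "bounded_linear (\<lambda>h. inner w h)" by (rule bounded_linear_inner_right)
          have intw: "integrable (lebesgue_on {0..t}) (\<lambda>r. inner w (Lf (f r)))"
            by (rule integrable_bounded_linear[OF blw intLf])
          have "norm w ^ 2 = inner w w" by (simp add: power2_norm_eq_inner)
          also have "\<dots> = integral\<^sup>L (lebesgue_on {0..t}) (\<lambda>r. inner w (Lf (f r)))"
            by (simp only: integral_bounded_linear[OF blw intLf] w_def[symmetric])
          also have "\<dots> \<le> integral\<^sup>L (lebesgue_on {0..t}) (\<lambda>r. norm w * g r)"
          proof (rule Bochner_Integration.integral_mono[OF intw integrable_mult_right[OF intg]])
            fix r assume r: "r \<in> space (lebesgue_on {0..t})"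
            have "inner w (Lf (f r)) \<le> norm w * norm (Lf (f r))" by (rule norm_cauchy_schwarz)
            also have "\<dots> \<le> norm w * g r" by (intro mult_left_mono pw[OF r]) simp
            finally show "inner w (Lf (f r)) \<le> norm w * g r" .
          qed
          also have "\<dots> = norm w * integral\<^sup>L (lebesgue_on {0..t}) g" by simp
          finally have w2: "norm w * norm w \<le> norm w * integral\<^sup>L (lebesgue_on {0..t}) g"
            by (simp add: power2_eq_square)
          have g0: "integral\<^sup>L (lebesgue_on {0..t}) g \<ge> 0"
            by (rule Bochner_Integration.integral_nonneg) (meson pw norm_ge_zero order_trans)
          have "norm (Lf (\<phi> t)) \<le> integral\<^sup>L (lebesgue_on {0..t}) g"
            unfolding wL using w2 g0 by (cases "norm w = 0") (auto simp: mult_le_cancel_left)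
          also have "\<dots> \<le> c * (real n * L * \<delta> + U / L)" by (rule intg_val)
          also have "\<dots> = W k * D / 2^p * (M * B * (real n * L * \<delta> + U / L))" unfolding cW by (simp add: mult_ac)
          also have "\<dots> \<le> W k * D / 2^Suc p" by (rule fin)
          finally show ?thesis by (simp add: Lf_def)
        qed
      qed
    qed
    show ?thesis
    proof (intro ballI impI)
      fix t assume t: "t \<in> {0..T0}" "t \<le> \<tau> + \<delta>"
      show "Zt t" unfolding Zt_def
      proof (intro allI impI)
        fix k m and s :: "nat \<Rightarrow> real" assume v: "valid m k" and s: "\<forall>j\<le>k. 0 \<le> s j"
        have "norm (C (opchain T N s m k (\<phi> t))) = 0"
          by (rule le_half_pow[where c="W k * D"]) (use Q t v s in auto)
        thus "C (opchain T N s m k (\<phi> t)) = 0" by simp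
      qed
    qed
  qed
  have P: "\<forall>t\<in>{0..T0}. t < real j * \<delta> \<longrightarrow> Zt t" for j
  proof (induction j)
    case 0 thus ?case using \<delta>0 by auto
  next
    case (Suc j)
    have "\<forall>t\<in>{0..T0}. t \<le> real j * \<delta> + \<delta> \<longrightarrow> Zt t"
      using step[of "real j * \<delta>"] Suc \<delta>0 by auto
    thus ?case by (auto simp: distrib_right)
  qed
  show ?thesis
  proof
    fix t assume t: "t \<in> {0..T0}"
    obtain j where "t / \<delta> < real j" using reals_Archimedean2 by blast
    hence "t < real j * \<delta>" using \<delta>0 by (simp add: field_simps)
    hence "Zt t" using P t by blast
    hence Zt': "\<forall>k m s. valid m k \<longrightarrow> (\<forall>j\<le>k. s j \<ge> 0) \<longrightarrow> C (opchain T N s m k (\<phi> t)) = 0"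
      unfolding Zt_def .
    have "C (opchain T N (\<lambda>_. 0) (\<lambda>_. 0) 0 (\<phi> t)) = 0"
      using Zt'[rule_format, where k=0 and m="\<lambda>_. 0" and s="\<lambda>_. 0"] by (simp add: valid_def)
    thus "C (\<phi> t) = 0" by simp
  qed
qed



end
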